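(* For any simple undirected graph $G$, the quantity $$\Lambda_1=\sum_{\{st,uv\}\in Q}\big(a_{su}(k_t+k_v)+a_{sv}(k_t+k_u)+a_{tu}(k_s+k_v)+a_{tv}(k_s+k_u)\big)$$ satisfies $$\Lambda_1=\sum_{st\in E}\Big((k_t-1)(\xi(s)-k_t)+(k_s-1)(\xi(t)-k_s)-2S_{s,t}\Big).$$
   Context: $a_{ij}$ adjacency entries, $k_x$ degree, $\Gamma(x)$ neighbourhood, $\xi(s)=\sum_{t\in\Gamma(s)}k_t$, $c(s,t)=\Gamma(s)\cap\Gamma(t)$, $S_{s,t}=\sum_{u\in c(s,t)}k_u$. $Q$ is the set of unordered pairs $\{st,uv\}$ of edges with $s,t,u,v$ pairwise distinct. *)

theory Defs
  imports Main
begin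

(* A simple undirected graph is given by a finite vertex set V and an
   adjacency relation adj (symmetric, irreflexive, supported on V). *)

definition adjm :: "('a \<Rightarrow> 'a \<Rightarrow> bool) \<Rightarrow> 'a \<Rightarrow> 'a \<Rightarrow> int" where
  "adjm adj i j = (if adj i j then 1 else 0)"

definition nbhd :: "'a set \<Rightarrow> ('a \<Rightarrow> 'a \<Rightarrow> bool) \<Rightarrow> 'a \<Rightarrow> 'a set" where
  "nbhd V adj x = {y \<in> V. adj x y}"

definition deg :: "'a set \<Rightarrow> ('a \<Rightarrow> 'a \<Rightarrow> bool) \<Rightarrow> 'a \<Rightarrow> int" where
  "deg V adj x = int (card (nbhd V adj x))"

definition xi :: "'a set \<Rightarrow> ('a \<Rightarrow> 'a \<Rightarrow> bool) \<Rightarrow> 'a \<Rightarrow> int" where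
  "xi V adj s = (\<Sum>t\<in>nbhd V adj s. deg V adj t)"

definition common :: "'a set \<Rightarrow> ('a \<Rightarrow> 'a \<Rightarrow> bool) \<Rightarrow> 'a \<Rightarrow> 'a \<Rightarrow> 'a set" where
  "common V adj s t = nbhd V adj s \<inter> nbhd V adj t"

definition Ssum :: "'a set \<Rightarrow> ('a \<Rightarrow> 'a \<Rightarrow> bool) \<Rightarrow> 'a \<Rightarrow> 'a \<Rightarrow> int" where
  "Ssum V adj s t = (\<Sum>u\<in>common V adj s t. deg V adj u)"

definition edges :: "'a set \<Rightarrow> ('a \<Rightarrow> 'a \<Rightarrow> bool) \<Rightarrow> 'a set set" where
  "edges V adj = {{s, t} | s t. s \<in> V \<and> t \<in> V \<and> adj s t}"

definition Qpairs :: "'a set \<Rightarrow> ('a \<Rightarrow> 'a \<Rightarrow> bool) \<Rightarrow> 'a set set set" where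
  "Qpairs V adj = {{{s, t}, {u, v}} | s t u v.
      s \<in> V \<and> t \<in> V \<and> u \<in> V \<and> v \<in> V \<and> adj s t \<and> adj u v \<and> distinct [s, t, u, v]}"

definition lam_term :: "'a set \<Rightarrow> ('a \<Rightarrow> 'a \<Rightarrow> bool) \<Rightarrow> 'a \<Rightarrow> 'a \<Rightarrow> 'a \<Rightarrow> 'a \<Rightarrow> int" where
  "lam_term V adj s t u v =
     adjm adj s u * (deg V adj t + deg V adj v) + adjm adj s v * (deg V adj t + deg V adj u)
   + adjm adj t u * (deg V adj s + deg V adj v) + adjm adj t v * (deg V adj s + deg V adj u)"

(* The summand is invariant under the labelings of a pair {st,uv}, so any
   representative labeling (chosen via SOME) gives the same value. *)
definition Lambda1 :: "'a set \<Rightarrow> ('a \<Rightarrow> 'a \<Rightarrow> bool) \<Rightarrow> int" where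
  "Lambda1 V adj = (\<Sum>q\<in>Qpairs V adj.
     (case (SOME (s, t, u, v). q = {{s, t}, {u, v}} \<and> adj s t \<and> adj u v \<and> distinct [s, t, u, v])
      of (s, t, u, v) \<Rightarrow> lam_term V adj s t u v))"

definition edge_term :: "'a set \<Rightarrow> ('a \<Rightarrow> 'a \<Rightarrow> bool) \<Rightarrow> 'a \<Rightarrow> 'a \<Rightarrow> int" where
  "edge_term V adj s t =
     (deg V adj t - 1) * (xi V adj s - deg V adj t) + (deg V adj s - 1) * (xi V adj t - deg V adj s)
     - 2 * Ssum V adj s t"

end

theory Submission
  imports Defs
begin

lemma pair_sum:
  fixes h :: "'b \<Rightarrow> 'b \<Rightarrow> int"
  assumes "finite A" "\<And>x y. (x,y)\<in>A \<Longrightarrow> x\<noteq>y" "\<And>x y. (x,y)\<in>A \<Longrightarrow> (y,x)\<in>A"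
    "\<And>x y. (x,y)\<in>A \<Longrightarrow> h' {x,y} = h x y"
  shows "(\<Sum>(x,y)\<in>A. h x y) = 2 * (\<Sum>e\<in>(\<lambda>(x,y). {x,y}) ` A. h' e)"
proof -
  let ?g = "\<lambda>(x::'b,y::'b). {x,y}"
  have "(\<Sum>(x,y)\<in>A. h x y) = (\<Sum>e\<in>?g`A. \<Sum>p\<in>{p\<in>A. ?g p = e}. (case p of (x,y) \<Rightarrow> h x y))"
    using sum.group[of A "?g`A" ?g "\<lambda>(x,y). h x y"] assms(1) by auto
  also have "\<dots> = (\<Sum>e\<in>?g`A. 2 * h' e)"
  proof (rule sum.cong[OF refl])
    fix e assume "e \<in> ?g`A"
    then obtain x y where xy: "(x,y)\<in>A" "e={x,y}" by auto
    have "{p\<in>A. ?g p = e} = {(x,y),(y,x)}" using xy assms(3) by (auto simp: doubleton_eq_iff)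
    moreover have "x\<noteq>y" using xy assms(2) by auto
    moreover have "h' {y,x} = h y x" using assms(4) assms(3) xy by blast
    ultimately show "(\<Sum>p\<in>{p\<in>A. ?g p = e}. (case p of (x,y) \<Rightarrow> h x y)) = 2*h' e"
      using assms(4) xy by (simp add: insert_commute)
  qed
  also have "\<dots> = 2 * (\<Sum>e\<in>?g`A. h' e)" by (simp add: sum_distrib_left)
  finally show ?thesis .
qed

context
  fixes V :: "'a set" and adj :: "'a \<Rightarrow> 'a \<Rightarrow> bool"
  assumes fin: "finite V"
    and sym: "\<And>x y. adj x y \<Longrightarrow> adj y x"
    and irr: "\<And>x. \<not> adj x x"
    and inV: "\<And>x y. adj x y \<Longrightarrow> x \<in> V \<and> y \<in> V"
begin

lemma adjm_sym: "adjm adj x y = adjm adj y x"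
  unfolding adjm_def using sym by auto

lemma Ssum_sym: "Ssum V adj s t = Ssum V adj t s"
  unfolding Ssum_def common_def by (simp add: Int_commute)

lemma edge_term_sym: "edge_term V adj s t = edge_term V adj t s"
  unfolding edge_term_def using Ssum_sym by simp

lemma finN: "finite (nbhd V adj x)"
  using fin unfolding nbhd_def by auto

definition Ad where "Ad = {(s,t). adj s t}"

lemma finAd: "finite Ad"
proof -
  have "Ad \<subseteq> V \<times> V" unfolding Ad_def using inV by auto
  thus ?thesis using fin finite_subset by blast
qed

lemma edges_eq: "edges V adj = (\<lambda>(x,y). {x,y}) ` Ad"
  unfolding edges_def Ad_def using inV by auto

lemma rhs2:
  "2 * (\<Sum>e\<in>edges V adj. (case (SOME (s, t). e = {s, t} \<and> adj s t) of (s, t) \<Rightarrow> edge_term V adj s t))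
   = (\<Sum>(s,t)\<in>Ad. edge_term V adj s t)"
proof -
  have "(\<Sum>(s,t)\<in>Ad. edge_term V adj s t) = 2 * (\<Sum>e\<in>(\<lambda>(x,y). {x,y}) ` Ad.
     (case (SOME (s, t). e = {s, t} \<and> adj s t) of (s, t) \<Rightarrow> edge_term V adj s t))"
  proof (rule pair_sum[OF finAd])
    show "\<And>x y. (x, y) \<in> Ad \<Longrightarrow> x \<noteq> y" unfolding Ad_def using irr by auto
    show "\<And>x y. (x, y) \<in> Ad \<Longrightarrow> (y, x) \<in> Ad" unfolding Ad_def using sym by auto
    fix x y assume "(x,y) \<in> Ad"
    hence a: "adj x y" unfolding Ad_def by auto
    let ?P = "\<lambda>(s,t). {x,y} = {s, t} \<and> adj s t"
    have "\<exists>p. ?P p" using a by auto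
    hence "?P (SOME p. ?P p)" by (rule someI_ex)
    then obtain a b where ab: "(SOME p. ?P p) = (a,b)" "{x,y} = {a,b}" by (auto split: prod.splits)
    show "(case (SOME (s, t). {x,y} = {s, t} \<and> adj s t) of (s, t) \<Rightarrow> edge_term V adj s t) = edge_term V adj x y"
    proof -
      have "(case (SOME p. ?P p) of (s, t) \<Rightarrow> edge_term V adj s t) = edge_term V adj a b"
        by (simp only: ab(1) prod.case)
      also have "\<dots> = edge_term V adj x y" using ab(2) edge_term_sym by (auto simp: doubleton_eq_iff)
      finally show ?thesis .
    qed
  qed
  thus ?thesis using edges_eq by simp
qed

definition T where "T = {(s,t,u,v). adj s t \<and> adj u v \<and> distinct [s,t,u,v]}"

lemma finT: "finite T"
proof -
  have "T \<subseteq> V \<times> V \<times> V \<times> V" unfolding T_def using inV by auto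
  thus ?thesis using fin finite_subset by blast
qed

lemma Q_eq: "Qpairs V adj = (\<lambda>(s,t,u,v). {{s,t},{u,v}}) ` T"
proof (rule set_eqI, rule iffI)
  fix q assume "q \<in> Qpairs V adj"
  then obtain s t u v where q: "q = {{s,t},{u,v}}" and c: "adj s t" "adj u v" "distinct [s,t,u,v]"
    unfolding Qpairs_def mem_Collect_eq by blast
  have "(s,t,u,v) \<in> T" unfolding T_def using c by simp
  thus "q \<in> (\<lambda>(s,t,u,v). {{s,t},{u,v}}) ` T" unfolding q by (rule rev_image_eqI) simp
next
  fix q assume "q \<in> (\<lambda>(s,t,u,v). {{s,t},{u,v}}) ` T"
  then obtain p where p: "p \<in> T" "q = (\<lambda>(s,t,u,v). {{s,t},{u,v}}) p" by blast
  obtain s t u v where pe: "p = (s,t,u,v)" by (cases p) blast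
  have q: "q = {{s,t},{u,v}}" using p(2) unfolding pe by simp
  have c: "adj s t" "adj u v" "distinct [s,t,u,v]" using p(1) unfolding pe T_def by auto
  have V: "s \<in> V" "t \<in> V" "u \<in> V" "v \<in> V" using c inV by auto
  show "q \<in> Qpairs V adj" unfolding Qpairs_def mem_Collect_eq q using c V by blast
qed

definition F8 :: "'a \<Rightarrow> 'a \<Rightarrow> 'a \<Rightarrow> 'a \<Rightarrow> ('a \<times> 'a \<times> 'a \<times> 'a) set" where
  "F8 s t u v = {(s,t,u,v),(t,s,u,v),(s,t,v,u),(t,s,v,u),(u,v,s,t),(v,u,s,t),(u,v,t,s),(v,u,t,s)}"

lemma fiber_sub:
  assumes "{{a,b},{c,d}} = {{s,t},{u,v}}"
  shows "(a,b,c,d) \<in> F8 s t u v"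
proof -
  have "({a,b}={s,t} \<and> {c,d}={u,v}) \<or> ({a,b}={u,v} \<and> {c,d}={s,t})"
    using assms by (simp only: doubleton_eq_iff)
  then show ?thesis
  proof (elim disjE conjE)
    assume "{a,b}={s,t}" "{c,d}={u,v}"
    thus ?thesis unfolding doubleton_eq_iff F8_def by (elim disjE conjE) simp_all
  next
    assume "{a,b}={u,v}" "{c,d}={s,t}"
    thus ?thesis unfolding doubleton_eq_iff F8_def by (elim disjE conjE) simp_all
  qed
qed

lemma fiber_eq:
  assumes "(s,t,u,v) \<in> T"
  shows "{p\<in>T. (case p of (s,t,u,v) \<Rightarrow> {{s,t},{u,v}}) = {{s,t},{u,v}}} = F8 s t u v"
proof
  show "{p\<in>T. (case p of (s,t,u,v) \<Rightarrow> {{s,t},{u,v}}) = {{s,t},{u,v}}} \<subseteq> F8 s t u v"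
  proof
    fix p assume p: "p \<in> {p\<in>T. (case p of (s,t,u,v) \<Rightarrow> {{s,t},{u,v}}) = {{s,t},{u,v}}}"
    obtain a b c d where "p = (a,b,c,d)" by (cases p) auto
    have "{{a,b},{c,d}} = {{s,t},{u,v}}" using p unfolding \<open>p = (a,b,c,d)\<close> mem_Collect_eq prod.case
      by (rule conjunct2)
    thus "p \<in> F8 s t u v" unfolding \<open>p = (a,b,c,d)\<close> by (rule fiber_sub)
  qed
  have d: "adj s t" "adj u v" "distinct [s,t,u,v]" using assms unfolding T_def by auto
  hence d2: "adj t s" "adj v u" using sym by auto
  show "F8 s t u v \<subseteq> {p\<in>T. (case p of (s,t,u,v) \<Rightarrow> {{s,t},{u,v}}) = {{s,t},{u,v}}}"
    unfolding F8_def T_def using d d2 by (auto simp: doubleton_eq_iff)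
qed

lemma lam_inv:
  "lam_term V adj t s u v = lam_term V adj s t u v"
  "lam_term V adj s t v u = lam_term V adj s t u v"
  "lam_term V adj t s v u = lam_term V adj s t u v"
  "lam_term V adj u v s t = lam_term V adj s t u v"
  "lam_term V adj v u s t = lam_term V adj s t u v"
  "lam_term V adj u v t s = lam_term V adj s t u v"
  "lam_term V adj v u t s = lam_term V adj s t u v"
  unfolding lam_term_def by (simp_all add: adjm_sym algebra_simps)

lemma F8_sum:
  assumes "distinct [s,t,u,v]"
  shows "(\<Sum>p\<in>F8 s t u v. (case p of (s,t,u,v) \<Rightarrow> lam_term V adj s t u v)) = 8 * lam_term V adj s t u v"
proof -
  have ne: "s\<noteq>t" "s\<noteq>u" "s\<noteq>v" "t\<noteq>u" "t\<noteq>v" "u\<noteq>v" "t\<noteq>s" "u\<noteq>s" "v\<noteq>s" "u\<noteq>t" "v\<noteq>t" "v\<noteq>u"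
    using assms by auto
  show ?thesis unfolding F8_def
    by (simp only: sum.insert finite.emptyI finite_insert insert_iff empty_iff prod.inject ne simp_thms sum.empty prod.case lam_inv)
qed

lemma L_eq:
  assumes "(s,t,u,v) \<in> T"
  shows "(case (SOME (a, b, c, d). {{s,t},{u,v}} = {{a, b}, {c, d}} \<and> adj a b \<and> adj c d \<and> distinct [a, b, c, d])
      of (a, b, c, d) \<Rightarrow> lam_term V adj a b c d) = lam_term V adj s t u v"
proof -
  let ?P = "\<lambda>(a, b, c, d). {{s,t},{u,v}} = {{a, b}, {c, d}} \<and> adj a b \<and> adj c d \<and> distinct [a, b, c, d]"
  have "\<exists>p. ?P p" using assms unfolding T_def by auto
  hence Ps: "?P (SOME p. ?P p)" by (rule someI_ex)
  obtain a b c d where ab1: "(SOME p. ?P p) = (a,b,c,d)" by (cases "SOME p. ?P p") blast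
  have ab2: "{{s,t},{u,v}} = {{a, b}, {c, d}}" using Ps unfolding ab1 prod.case by (rule conjunct1)
  note ab = ab1 ab2
  have "(case (SOME p. ?P p) of (s, t, u, v) \<Rightarrow> lam_term V adj s t u v) = lam_term V adj a b c d"
    by (simp only: ab(1) prod.case)
  also have "\<dots> = lam_term V adj s t u v"
  proof -
    have "(a,b,c,d) \<in> F8 s t u v" by (rule fiber_sub) (rule ab(2)[symmetric])
    thus ?thesis unfolding F8_def
      by (elim insertE emptyE) (simp_all only: prod.inject lam_inv)
  qed
  finally show ?thesis .
qed

lemma lhs8: "8 * Lambda1 V adj = (\<Sum>(s,t,u,v)\<in>T. lam_term V adj s t u v)"
proof -
  let ?g = "\<lambda>(s::'a,t::'a,u::'a,v::'a). {{s,t},{u,v}}"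
  have "(\<Sum>(s,t,u,v)\<in>T. lam_term V adj s t u v) =
    (\<Sum>q\<in>?g`T. \<Sum>p\<in>{p\<in>T. ?g p = q}. (case p of (s,t,u,v) \<Rightarrow> lam_term V adj s t u v))"
    by (rule sum.group[OF finT finite_imageI[OF finT] subset_refl, symmetric])
  also have "\<dots> = (\<Sum>q\<in>?g`T. 8 * (case (SOME (s, t, u, v). q = {{s, t}, {u, v}} \<and> adj s t \<and> adj u v \<and> distinct [s, t, u, v])
      of (s, t, u, v) \<Rightarrow> lam_term V adj s t u v))"
  proof (rule sum.cong[OF refl])
    fix q assume "q \<in> ?g`T"
    then obtain s t u v where st: "(s,t,u,v) \<in> T" "q = {{s,t},{u,v}}" by auto
    have d: "distinct [s,t,u,v]" using st unfolding T_def by auto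
    show "(\<Sum>p\<in>{p\<in>T. ?g p = q}. (case p of (s,t,u,v) \<Rightarrow> lam_term V adj s t u v)) = 8 * (case (SOME (s, t, u, v). q = {{s, t}, {u, v}} \<and> adj s t \<and> adj u v \<and> distinct [s, t, u, v])
      of (s, t, u, v) \<Rightarrow> lam_term V adj s t u v)"
      unfolding st(2) fiber_eq[OF st(1)] F8_sum[OF d] L_eq[OF st(1)] ..
  qed
  also have "\<dots> = 8 * Lambda1 V adj"
    unfolding Lambda1_def Q_eq by (simp add: sum_distrib_left)
  finally show ?thesis by simp
qed

definition P0 :: "'a \<times> 'a \<times> 'a \<times> 'a \<Rightarrow> int" where
  "P0 p = (case p of (s,t,u,v) \<Rightarrow> adjm adj s u * deg V adj t)"

lemma reidx:
  fixes f :: "'a \<times> 'a \<times> 'a \<times> 'a \<Rightarrow> int"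
  assumes "\<And>p. p\<in>T \<Longrightarrow> \<sigma> p \<in> T" "\<And>p. p\<in>T \<Longrightarrow> \<tau> p \<in> T"
    "\<And>p. p\<in>T \<Longrightarrow> \<sigma> (\<tau> p) = p" "\<And>p. p\<in>T \<Longrightarrow> \<tau> (\<sigma> p) = p"
  shows "(\<Sum>p\<in>T. f (\<sigma> p)) = (\<Sum>p\<in>T. f p)"
  by (rule sum.reindex_bij_witness[of T \<tau> \<sigma>]) (use assms in auto)

lemma lam_P0: "lam_term V adj s t u v = P0 (s,t,u,v) + P0 (u,v,s,t) + P0 (s,t,v,u) + P0 (v,u,s,t)
   + P0 (t,s,u,v) + P0 (u,v,t,s) + P0 (t,s,v,u) + P0 (v,u,t,s)"
  unfolding lam_term_def P0_def by (simp add: adjm_sym algebra_simps)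

lemma sumT_lam: "(\<Sum>(s,t,u,v)\<in>T. lam_term V adj s t u v) = 8 * sum P0 T"
proof -
  have "(\<Sum>(s,t,u,v)\<in>T. lam_term V adj s t u v) =
     (\<Sum>p\<in>T. P0 p + P0 (case p of (s,t,u,v) \<Rightarrow> (u,v,s,t)) + P0 (case p of (s,t,u,v) \<Rightarrow> (s,t,v,u))
       + P0 (case p of (s,t,u,v) \<Rightarrow> (v,u,s,t)) + P0 (case p of (s,t,u,v) \<Rightarrow> (t,s,u,v))
       + P0 (case p of (s,t,u,v) \<Rightarrow> (u,v,t,s)) + P0 (case p of (s,t,u,v) \<Rightarrow> (t,s,v,u))
       + P0 (case p of (s,t,u,v) \<Rightarrow> (v,u,t,s)))"
    by (rule sum.cong[OF refl]) (auto simp: lam_P0)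
  also have "\<dots> = sum P0 T + (\<Sum>p\<in>T. P0 (case p of (s,t,u,v) \<Rightarrow> (u,v,s,t))) + (\<Sum>p\<in>T. P0 (case p of (s,t,u,v) \<Rightarrow> (s,t,v,u)))
       + (\<Sum>p\<in>T. P0 (case p of (s,t,u,v) \<Rightarrow> (v,u,s,t))) + (\<Sum>p\<in>T. P0 (case p of (s,t,u,v) \<Rightarrow> (t,s,u,v)))
       + (\<Sum>p\<in>T. P0 (case p of (s,t,u,v) \<Rightarrow> (u,v,t,s))) + (\<Sum>p\<in>T. P0 (case p of (s,t,u,v) \<Rightarrow> (t,s,v,u)))
       + (\<Sum>p\<in>T. P0 (case p of (s,t,u,v) \<Rightarrow> (v,u,t,s)))"
    by (simp only: sum.distrib)
  also have "\<dots> = 8 * sum P0 T"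
  proof -
    have "(\<Sum>p\<in>T. P0 (case p of (s,t,u,v) \<Rightarrow> (u,v,s,t))) = sum P0 T"
      by (rule reidx[where \<tau>="\<lambda>p. case p of (s,t,u,v) \<Rightarrow> (u,v,s,t)"]) (auto simp: T_def dest: sym)
    moreover have "(\<Sum>p\<in>T. P0 (case p of (s,t,u,v) \<Rightarrow> (s,t,v,u))) = sum P0 T"
      by (rule reidx[where \<tau>="\<lambda>p. case p of (s,t,u,v) \<Rightarrow> (s,t,v,u)"]) (auto simp: T_def dest: sym)
    moreover have "(\<Sum>p\<in>T. P0 (case p of (s,t,u,v) \<Rightarrow> (v,u,s,t))) = sum P0 T"
      by (rule reidx[where \<tau>="\<lambda>p. case p of (s,t,u,v) \<Rightarrow> (u,v,t,s)"]) (auto simp: T_def dest: sym)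
    moreover have "(\<Sum>p\<in>T. P0 (case p of (s,t,u,v) \<Rightarrow> (t,s,u,v))) = sum P0 T"
      by (rule reidx[where \<tau>="\<lambda>p. case p of (s,t,u,v) \<Rightarrow> (t,s,u,v)"]) (auto simp: T_def dest: sym)
    moreover have "(\<Sum>p\<in>T. P0 (case p of (s,t,u,v) \<Rightarrow> (u,v,t,s))) = sum P0 T"
      by (rule reidx[where \<tau>="\<lambda>p. case p of (s,t,u,v) \<Rightarrow> (v,u,s,t)"]) (auto simp: T_def dest: sym)
    moreover have "(\<Sum>p\<in>T. P0 (case p of (s,t,u,v) \<Rightarrow> (t,s,v,u))) = sum P0 T"
      by (rule reidx[where \<tau>="\<lambda>p. case p of (s,t,u,v) \<Rightarrow> (t,s,v,u)"]) (auto simp: T_def dest: sym)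
    moreover have "(\<Sum>p\<in>T. P0 (case p of (s,t,u,v) \<Rightarrow> (v,u,t,s))) = sum P0 T"
      by (rule reidx[where \<tau>="\<lambda>p. case p of (s,t,u,v) \<Rightarrow> (v,u,t,s)"]) (auto simp: T_def dest: sym)
    ultimately show ?thesis by simp
  qed
  finally show ?thesis .
qed

definition fS :: "'a \<Rightarrow> 'a \<Rightarrow> int" where
  "fS s u = (deg V adj u - 1) * (xi V adj s - deg V adj u) - Ssum V adj s u"

lemma card_lem:
  assumes "adj s u" "t \<in> nbhd V adj s - {u}"
  shows "int (card (nbhd V adj u - {s,t})) = deg V adj u - 1 - (if t \<in> nbhd V adj u then 1 else 0)"
proof -
  have sN: "s \<in> nbhd V adj u" using assms(1) sym inV unfolding nbhd_def by auto
  have ts: "t \<noteq> s" using assms(2) irr unfolding nbhd_def by auto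
  have e: "nbhd V adj u - {s,t} = (nbhd V adj u - {s}) - {t}" by blast
  have c1: "card (nbhd V adj u - {s}) = card (nbhd V adj u) - 1" using sN finN by simp
  have c0: "card (nbhd V adj u) \<ge> 1" using sN finN
    by (metis One_nat_def Suc_leI card_gt_0_iff empty_iff)
  show ?thesis
  proof (cases "t \<in> nbhd V adj u")
    case True
    hence "t \<in> nbhd V adj u - {s}" using ts by simp
    hence "card (nbhd V adj u - {s,t}) = card (nbhd V adj u - {s}) - 1" unfolding e using finN by simp
    moreover have "card (nbhd V adj u - {s}) \<ge> 1"
      using \<open>t \<in> nbhd V adj u - {s}\<close> finN
      by (metis One_nat_def Suc_leI card_gt_0_iff empty_iff finite_Diff)
    ultimately show ?thesis using True c1 c0 unfolding deg_def by simp
  next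
    case False
    hence "card (nbhd V adj u - {s,t}) = card (nbhd V adj u - {s})" unfolding e by simp
    thus ?thesis using False c1 c0 unfolding deg_def by simp
  qed
qed

lemma inner:
  assumes "adj s u"
  shows "(\<Sum>t\<in>nbhd V adj s - {u}. \<Sum>v\<in>nbhd V adj u - {s,t}. deg V adj t) = fS s u"
proof -
  have uN: "u \<in> nbhd V adj s" using assms inV unfolding nbhd_def by auto
  have "(\<Sum>t\<in>nbhd V adj s - {u}. \<Sum>v\<in>nbhd V adj u - {s,t}. deg V adj t)
     = (\<Sum>t\<in>nbhd V adj s - {u}. (deg V adj u - 1) * deg V adj t - (if t \<in> nbhd V adj u then deg V adj t else 0))"
  proof (rule sum.cong[OF refl])
    fix t assume t: "t \<in> nbhd V adj s - {u}"
    have "(\<Sum>v\<in>nbhd V adj u - {s,t}. deg V adj t) = int (card (nbhd V adj u - {s,t})) * deg V adj t"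
      by simp
    also have "\<dots> = (deg V adj u - 1) * deg V adj t - (if t \<in> nbhd V adj u then deg V adj t else 0)"
      unfolding card_lem[OF assms t] by (simp add: algebra_simps)
    finally show "(\<Sum>v\<in>nbhd V adj u - {s,t}. deg V adj t) = (deg V adj u - 1) * deg V adj t - (if t \<in> nbhd V adj u then deg V adj t else 0)" .
  qed
  also have "\<dots> = (deg V adj u - 1) * (\<Sum>t\<in>nbhd V adj s - {u}. deg V adj t)
      - (\<Sum>t\<in>nbhd V adj s - {u}. (if t \<in> nbhd V adj u then deg V adj t else 0))"
    by (simp add: sum_subtractf sum_distrib_left)
  also have "(\<Sum>t\<in>nbhd V adj s - {u}. deg V adj t) = xi V adj s - deg V adj u"
    unfolding xi_def using uN finN by (simp add: sum_diff1)
  also have "(\<Sum>t\<in>nbhd V adj s - {u}. (if t \<in> nbhd V adj u then deg V adj t else 0)) = Ssum V adj s u"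
  proof -
    have "(\<Sum>t\<in>nbhd V adj s - {u}. (if t \<in> nbhd V adj u then deg V adj t else 0))
        = (\<Sum>t\<in>{t\<in>nbhd V adj s - {u}. t \<in> nbhd V adj u}. deg V adj t)"
      by (rule sum.inter_filter[symmetric]) (simp add: finN)
    also have "{t\<in>nbhd V adj s - {u}. t \<in> nbhd V adj u} = common V adj s u"
      unfolding common_def nbhd_def using irr by auto
    finally show ?thesis unfolding Ssum_def .
  qed
  finally show ?thesis unfolding fS_def .
qed

lemma sumP0: "sum P0 T = (\<Sum>(s,u)\<in>Ad. fS s u)"
proof -
  let ?T' = "{p\<in>T. adj (fst p) (fst (snd (snd p)))}"
  let ?Q0 = "\<lambda>p::'a\<times>'a\<times>'a\<times>'a. deg V adj (fst (snd p))"
  let ?g = "\<lambda>p::'a\<times>'a\<times>'a\<times>'a. (fst p, fst (snd (snd p)))"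
  have "sum P0 T = (\<Sum>p\<in>T. if adj (fst p) (fst (snd (snd p))) then ?Q0 p else 0)"
    by (rule sum.cong[OF refl]) (auto simp: P0_def adjm_def)
  also have "\<dots> = sum ?Q0 ?T'" using finT by (simp add: sum.inter_filter)
  also have "\<dots> = (\<Sum>y\<in>Ad. sum ?Q0 {p\<in>?T'. ?g p = y})"
    by (rule sum.group[symmetric]) (use finT finAd in \<open>auto simp: Ad_def\<close>)
  also have "\<dots> = (\<Sum>(s,u)\<in>Ad. fS s u)"
  proof (rule sum.cong[OF refl])
    fix y assume "y \<in> Ad"
    then obtain s u where y: "y = (s,u)" "adj s u" unfolding Ad_def by auto
    let ?S = "SIGMA t:nbhd V adj s - {u}. nbhd V adj u - {s,t}"
    have fib: "{p\<in>?T'. ?g p = y} = (\<lambda>(t,v). (s,t,u,v)) ` ?S"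
    proof (rule set_eqI)
      fix p :: "'a \<times> 'a \<times> 'a \<times> 'a"
      obtain a b c d where pe: "p = (a,b,c,d)" by (cases p) blast
      show "p \<in> {p\<in>?T'. ?g p = y} \<longleftrightarrow> p \<in> (\<lambda>(t,v). (s,t,u,v)) ` ?S"
        unfolding pe y(1) T_def nbhd_def using inV sym irr y(2) by auto
    qed
    have inj: "inj_on (\<lambda>(t,v). (s,t,u,v)) ?S" unfolding inj_on_def by auto
    have "sum ?Q0 {p\<in>?T'. ?g p = y} = (\<Sum>(t,v)\<in>?S. deg V adj t)"
      unfolding fib by (subst sum.reindex[OF inj]) (simp add: case_prod_unfold)
    also have "\<dots> = (\<Sum>t\<in>nbhd V adj s - {u}. \<Sum>v\<in>nbhd V adj u - {s,t}. deg V adj t)"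
      by (rule sum.Sigma[symmetric]) (use finN in auto)
    also have "\<dots> = fS s u" by (rule inner[OF y(2)])
    finally show "sum ?Q0 {p\<in>?T'. ?g p = y} = (case y of (s,u) \<Rightarrow> fS s u)" using y by simp
  qed
  finally show ?thesis .
qed

lemma rhs_f: "(\<Sum>(s,t)\<in>Ad. edge_term V adj s t) = 2 * (\<Sum>(s,u)\<in>Ad. fS s u)"
proof -
  have "(\<Sum>(s,t)\<in>Ad. edge_term V adj s t) = (\<Sum>(s,t)\<in>Ad. fS s t + fS t s)"
    by (rule sum.cong[OF refl]) (auto simp: edge_term_def fS_def Ssum_sym[of _ _])
  also have "\<dots> = (\<Sum>(s,t)\<in>Ad. fS s t) + (\<Sum>(s,t)\<in>Ad. fS t s)"
    by (simp add: sum.distrib case_prod_unfold)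
  also have "(\<Sum>(s,t)\<in>Ad. fS t s) = (\<Sum>(s,t)\<in>Ad. fS s t)"
    by (rule sum.reindex_bij_witness[of Ad prod.swap prod.swap]) (auto simp: Ad_def dest: sym)
  finally show ?thesis by simp
qed

end


theorem proposition14:
  fixes V :: "'a set" and adj :: "'a \<Rightarrow> 'a \<Rightarrow> bool"
  assumes "finite V"
    and "\<And>x y. adj x y \<Longrightarrow> adj y x"
    and "\<And>x. \<not> adj x x"
    and "\<And>x y. adj x y \<Longrightarrow> x \<in> V \<and> y \<in> V"
  shows "Lambda1 V adj =
    (\<Sum>e\<in>edges V adj. (case (SOME (s, t). e = {s, t} \<and> adj s t) of (s, t) \<Rightarrow> edge_term V adj s t))"
proof -
  have "8 * Lambda1 V adj = 8 * (\<Sum>(s,u)\<in>Ad adj. fS V adj s u)"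
    using lhs8[where V=V and adj=adj, OF assms] sumT_lam[where V=V and adj=adj, OF assms] sumP0[where V=V and adj=adj, OF assms] by simp
  moreover have "2 * (\<Sum>e\<in>edges V adj. (case (SOME (s, t). e = {s, t} \<and> adj s t) of (s, t) \<Rightarrow> edge_term V adj s t))
     = 2 * (\<Sum>(s,u)\<in>Ad adj. fS V adj s u)"
    using rhs2[where V=V and adj=adj, OF assms] rhs_f[where V=V and adj=adj, OF assms] by simp
  ultimately show ?thesis by simp
qed

end
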